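(* Let $n$ be a positive integer and let $G$ be a pure $(2n+1)$-sparse gapset of genus $g=3n+2$ with multiplicity $m$. If $G$ is pseudo-symmetric, then $m=2n+1$.
   Context: A gapset is a finite set $G\subset\mathbb{N}=\{1,2,\dots\}$ such that whenever $z\in G$ and $z=x+y$ with $x,y\in\mathbb{N}$, then $x\in G$ or $y\in G$; its genus is $g=\#G$. Writing $G=\{\ell_1<\dots<\ell_g\}$, multiplicity $m(G)=\min\{s\in\mathbb{N}:s\notin G\}$, Frobenius number $F(G)=\ell_g$; $G$ is pseudo-symmetric if $F(G)=2g-2$. $G$ is pure $\kappa$-sparse if $\ell_{i+1}-\ell_i\le\kappa$ for all $i$ with equality for some $i$. *)

theory Defs
  imports Main
begin

definition gapset :: "nat set \<Rightarrow> bool" where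
  "gapset G \<longleftrightarrow> finite G \<and> 0 \<notin> G \<and>
     (\<forall>z\<in>G. \<forall>x y. x \<ge> 1 \<and> y \<ge> 1 \<and> z = x + y \<longrightarrow> x \<in> G \<or> y \<in> G)"

definition genus :: "nat set \<Rightarrow> nat" where
  "genus G = card G"

definition multiplicity :: "nat set \<Rightarrow> nat" where
  "multiplicity G = (LEAST s. s \<ge> 1 \<and> s \<notin> G)"

definition frobenius :: "nat set \<Rightarrow> nat" where
  "frobenius G = Max G"

definition pseudo_symmetric :: "nat set \<Rightarrow> bool" where
  "pseudo_symmetric G \<longleftrightarrow> frobenius G = 2 * genus G - 2"

definition consecutive :: "nat set \<Rightarrow> nat \<Rightarrow> nat \<Rightarrow> bool" where
  "consecutive G x y \<longleftrightarrow> x \<in> G \<and> y \<in> G \<and> x < y \<and> (\<forall>z\<in>G. \<not> (x < z \<and> z < y))"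

definition pure_sparse :: "nat \<Rightarrow> nat set \<Rightarrow> bool" where
  "pure_sparse \<kappa> G \<longleftrightarrow> (\<forall>x y. consecutive G x y \<longrightarrow> y - x \<le> \<kappa>) \<and>
     (\<exists>x y. consecutive G x y \<and> y - x = \<kappa>)"

end

theory Submission
  imports Defs
begin

theorem mainTheorem12:
  fixes n :: nat and G :: "nat set"
  assumes "n \<ge> 1"
    and "gapset G"
    and "pure_sparse (2 * n + 1) G"
    and "genus G = 3 * n + 2"
    and "pseudo_symmetric G"
  shows "multiplicity G = 2 * n + 1"
proof -
  have fin: "finite G" and z: "0 \<notin> G"
    and cl: "\<And>z x y. z \<in> G \<Longrightarrow> x \<ge> 1 \<Longrightarrow> y \<ge> 1 \<Longrightarrow> z = x + y \<Longrightarrow> x \<in> G \<or> y \<in> G"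
    using assms(2) unfolding gapset_def by blast+
  have cardG: "card G = 3*n+2" using assms(4) unfolding genus_def by simp
  have gne: "G \<noteq> {}" using cardG by auto
  define F where "F = Max G"
  have F: "F = 6*n+2" using assms(5) cardG unfolding pseudo_symmetric_def frobenius_def genus_def F_def
    by simp
  have FG: "F \<in> G" using fin gne F_def by simp
  have Fmax: "\<And>z. z \<in> G \<Longrightarrow> z \<le> F" using fin F_def by simp
  define m where "m = multiplicity G"
  have ex: "\<exists>s. s \<ge> 1 \<and> s \<notin> G" using Fmax[of "F+1"] by (intro exI[of _ "F+1"]) auto
  have m1: "m \<ge> 1 \<and> m \<notin> G" unfolding m_def multiplicity_def using LeastI_ex[OF ex] .
  have mlt: "\<And>s. 1 \<le> s \<Longrightarrow> s < m \<Longrightarrow> s \<in> G"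
    unfolding m_def multiplicity_def using not_less_Least by blast
  obtain x y where cxy: "consecutive G x y" and dxy: "y - x = 2*n+1"
    using assms(3) unfolding pure_sparse_def by blast
  have sp: "\<And>x y. consecutive G x y \<Longrightarrow> y - x \<le> 2*n+1"
    using assms(3) unfolding pure_sparse_def by blast
  have lower: "m \<ge> 2*n+1"
  proof (rule ccontr)
    assume "\<not> ?thesis"
    hence mle: "m \<le> 2*n" by simp
    have yG: "y \<in> G" "x \<in> G" "x < y" and btw: "\<forall>z\<in>G. \<not> (x < z \<and> z < y)"
      using cxy unfolding consecutive_def by auto
    have "y - m \<in> G" using cl[OF yG(1), of m "y - m"] m1 mle dxy by auto
    moreover have "x < y - m" "y - m < y" using mle dxy m1 by auto
    ultimately show False using btw by blast
  qed
  have upper: "m \<le> 2*n+1"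
  proof (rule ccontr)
    assume "\<not> ?thesis"
    hence mge: "m \<ge> 2*n+2" by simp
    define T where "T = {s \<in> {0..F}. s \<notin> G}"
    define f where "f = (\<lambda>s. F - s)"
    have GT: "G \<subseteq> {0..F}" using Fmax by auto
    have cT: "card T = F + 1 - card G"
    proof -
      have "T = {0..F} - G" unfolding T_def by auto
      thus ?thesis using card_Diff_subset[OF fin GT] by simp
    qed
    have imG: "f ` T \<subseteq> G"
    proof
      fix w assume "w \<in> f ` T"
      then obtain s where s: "s \<in> T" "w = F - s" by (auto simp: f_def)
      show "w \<in> G"
      proof (cases "s = 0")
        case True thus ?thesis using s FG by simp
      next
        case False
        have "s \<noteq> F" using s FG unfolding T_def by auto
        hence "s < F" using s unfolding T_def by auto
        thus ?thesis using cl[OF FG, of s "F - s"] False s unfolding T_def by auto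
      qed
    qed
    have injf: "inj_on f T" unfolding inj_on_def f_def T_def by auto
    have cim: "card (f ` T) = 3*n+1" using card_image[OF injf] cT cardG F by simp
    have hG: "3*n+1 \<in> G"
    proof (rule ccontr)
      assume h: "3*n+1 \<notin> G"
      hence "3*n+1 \<in> T" unfolding T_def using F by auto
      hence "f (3*n+1) \<in> G" using imG by auto
      thus False using h F unfolding f_def by simp
    qed
    have nh: "3*n+1 \<notin> f ` T"
    proof
      assume "3*n+1 \<in> f ` T"
      then obtain s where "s \<in> T" "3*n+1 = F - s" by (auto simp: f_def)
      hence "s = 3*n+1" "s \<notin> G" using F unfolding T_def by auto
      thus False using hG by simp
    qed
    have sub: "f ` T \<subseteq> G - {3*n+1}" using imG nh by blast
    have eqim: "f ` T = G - {3*n+1}"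
      using card_subset_eq[OF _ sub] fin hG cim cardG by simp
    have key: "\<And>k. 1 \<le> k \<Longrightarrow> k \<le> 2*n+1 \<Longrightarrow> F - k \<notin> G"
    proof
      fix k assume k: "1 \<le> k" "k \<le> 2*n+1" "F - k \<in> G"
      have "F - k \<noteq> 3*n+1" using k F assms(1) by simp
      hence "F - k \<in> f ` T" using eqim k by auto
      then obtain s where "s \<in> T" "F - k = F - s" by (auto simp: f_def)
      hence "s = k" "s \<notin> G" using k F unfolding T_def by auto
      moreover have "k \<in> G" using mlt k mge by simp
      ultimately show False by simp
    qed
    define A where "A = {z \<in> G. z < F - (2*n+1)}"
    have oneA: "1 \<in> A" unfolding A_def using mlt[of 1] mge F assms(1) by auto
    have finA: "finite A" unfolding A_def using fin by simp
    define x0 where "x0 = Max A"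
    have x0A: "x0 \<in> A" using finA oneA x0_def by (metis Max_in empty_iff)
    have x0max: "\<And>z. z \<in> A \<Longrightarrow> z \<le> x0" using finA x0_def by simp
    have "consecutive G x0 F"
      unfolding consecutive_def
    proof (intro conjI ballI)
      show "x0 \<in> G" "F \<in> G" "x0 < F" using x0A FG unfolding A_def by auto
      fix z assume zG: "z \<in> G"
      show "\<not> (x0 < z \<and> z < F)"
      proof
        assume zz: "x0 < z \<and> z < F"
        show False
        proof (cases "z < F - (2*n+1)")
          case True thus False using x0max[of z] zG zz unfolding A_def by auto
        next
          case False
          have "1 \<le> F - z" "F - z \<le> 2*n+1" using False zz by auto
          hence "F - (F - z) \<notin> G" using key by blast
          thus False using zz zG by simp
        qed
      qed
    qed
    hence "F - x0 \<le> 2*n+1" using sp by blast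
    thus False using x0A unfolding A_def by auto
  qed
  show ?thesis using lower upper m_def by simp
qed

end
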